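(* Let $n\ge1$ and $0<\varphi<1$. Let $\mathbf B=(B_1,\dots,B_n)$ be $\{0,1\}$-valued random variables whose joint distribution $\mu$ belongs to $\overline{\mathcal B_\varphi}$, and let $\hat\Theta=\frac1n\sum_{i=1}^nB_i$. Then for each $P\in\{P_{\mathrm{X},n},P_{\mathrm{CH},n},P_{\mathrm{PBR},n}\}$ and every $p\ge0$, $$\mathbb{P}_\mu\big(P(\hat\Theta|\varphi)\le p\big)\le p.$$
   Context: $\overline{\mathcal B_\varphi}$ is the set of distributions $\mu$ of $(B_1,\dots,B_n)\in\{0,1\}^n$ such that for every $i$ and every $\mathbf b_{\le i-1}\in\{0,1\}^{i-1}$ with $\mathbb{P}_\mu(\mathbf B_{\le i-1}=\mathbf b_{\le i-1})>0$, $\mathbb{P}_\mu(B_i=1\mid \mathbf B_{\le i-1}=\mathbf b_{\le i-1})\le\varphi$. For $t\in[0,1]$ with $nt$ an integer (convention $0^0=1$): $P_{\mathrm{X},n}(t|\varphi)=\sum_{k\ge nt}\binom{n}{k}\varphi^k(1-\varphi)^{n-k}$; $P_{\mathrm{CH},n}(t|\varphi)=\left(\frac{\varphi}{t}\right)^{nt}\left(\frac{1-\varphi}{1-t}\right)^{n(1-t)}$ if $t\ge\varphi$, and $=1$ otherwise; $P_{\mathrm{PBR},n}(t|\varphi)=\varphi^{nt}(1-\varphi)^{n(1-t)}(n+1)\binom{n}{nt}$ if $t\ge\varphi$, and $=t^{nt}(1-t)^{n(1-t)}(n+1)\binom{n}{nt}$ otherwise. *)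

theory Defs
  imports "HOL-Probability.Probability"
begin

text \<open>A joint distribution of (B_1,...,B_n) in {0,1}^n is a pmf on boolean lists of
length n; the list entry xs ! i is B_(i+1) (True = 1).\<close>

definition Bbar :: "nat \<Rightarrow> real \<Rightarrow> bool list pmf set" where
  "Bbar n \<phi> = {\<mu>. set_pmf \<mu> \<subseteq> {xs. length xs = n} \<and>
     (\<forall>i<n. \<forall>b::bool list. length b = i \<longrightarrow>
        measure_pmf.prob \<mu> {xs. take i xs = b} > 0 \<longrightarrow>
        measure_pmf.prob \<mu> {xs. take i xs = b \<and> xs ! i}
          / measure_pmf.prob \<mu> {xs. take i xs = b} \<le> \<phi>)}"

definition Theta_hat :: "nat \<Rightarrow> bool list \<Rightarrow> real" where
  "Theta_hat n xs = real (length (filter id xs)) / real n"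

text \<open>The quantity n t is assumed to be an integer; it is used as the natural
number nat floor (n t) (exact in that case).  Natural-number exponents give the
convention 0^0 = 1.\<close>
definition nt :: "nat \<Rightarrow> real \<Rightarrow> nat" where
  "nt n t = nat \<lfloor>real n * t\<rfloor>"

definition P_X :: "nat \<Rightarrow> real \<Rightarrow> real \<Rightarrow> real" where
  "P_X n t \<phi> = (\<Sum>k\<in>{k. k \<le> n \<and> real k \<ge> real n * t}.
      real (n choose k) * \<phi> ^ k * (1 - \<phi>) ^ (n - k))"

definition P_CH :: "nat \<Rightarrow> real \<Rightarrow> real \<Rightarrow> real" where
  "P_CH n t \<phi> = (if t \<ge> \<phi>
      then (\<phi> / t) ^ nt n t * ((1 - \<phi>) / (1 - t)) ^ (n - nt n t)
      else 1)"

definition P_PBR :: "nat \<Rightarrow> real \<Rightarrow> real \<Rightarrow> real" where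
  "P_PBR n t \<phi> = (if t \<ge> \<phi>
      then \<phi> ^ nt n t * (1 - \<phi>) ^ (n - nt n t) * real (n + 1) * real (n choose nt n t)
      else t ^ nt n t * (1 - t) ^ (n - nt n t) * real (n + 1) * real (n choose nt n t))"

end

theory Submission
  imports Defs
begin
definition G :: "real \<Rightarrow> nat \<Rightarrow> int \<Rightarrow> real" where
  "G \<phi> m j = measure_pmf.prob (binomial_pmf m \<phi>) {i. int i \<ge> j}"

lemma prob_bind_bernoulli:
  assumes "0 \<le> p" "p \<le> 1"
  shows "measure_pmf.prob (bernoulli_pmf p \<bind> N) X =
         p * measure_pmf.prob (N True) X + (1 - p) * measure_pmf.prob (N False) X"
proof -
  have "emeasure (measure_pmf (bernoulli_pmf p \<bind> N)) X =
        ennreal p * emeasure (measure_pmf (N True)) X + ennreal (1 - p) * emeasure (measure_pmf (N False)) X"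
    using assms by (simp add: mult.commute)
  also have "\<dots> = ennreal (p * measure_pmf.prob (N True) X + (1 - p) * measure_pmf.prob (N False) X)"
    using assms by (simp add: measure_pmf.emeasure_eq_measure ennreal_mult ennreal_plus)
  finally have "ennreal (measure_pmf.prob (bernoulli_pmf p \<bind> N) X) = ennreal (p * measure_pmf.prob (N True) X + (1 - p) * measure_pmf.prob (N False) X)"
    by (simp only: measure_pmf.emeasure_eq_measure)
  then show ?thesis using assms
    by (subst (asm) ennreal_inj) (auto intro!: add_nonneg_nonneg mult_nonneg_nonneg)
qed

lemma G_Suc:
  assumes "0 \<le> \<phi>" "\<phi> \<le> 1"
  shows "G \<phi> (Suc m) j = \<phi> * G \<phi> m (j - 1) + (1 - \<phi>) * G \<phi> m j"
proof -
  have "G \<phi> (Suc m) j = measure_pmf.prob (bernoulli_pmf \<phi> \<bind> (\<lambda>b. map_pmf (\<lambda>k. (if b then 1 else 0) + k) (binomial_pmf m \<phi>))) {i. int i \<ge> j}"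
    unfolding G_def using assms by (simp add: binomial_pmf_Suc map_pmf_def)
  also have "\<dots> = \<phi> * measure_pmf.prob (binomial_pmf m \<phi>) {k. int (1 + k) \<ge> j} + (1 - \<phi>) * measure_pmf.prob (binomial_pmf m \<phi>) {k. int k \<ge> j}"
    using assms by (simp add: prob_bind_bernoulli vimage_def)
  finally show ?thesis unfolding G_def by (simp add: algebra_simps)
qed

lemma G_nonneg: "0 \<le> G \<phi> m j"
  unfolding G_def by simp

lemma G_le1: "G \<phi> m j \<le> 1"
  unfolding G_def by simp

lemma G_mono: "j \<le> j' \<Longrightarrow> G \<phi> m j' \<le> G \<phi> m j"
  unfolding G_def by (rule measure_pmf.finite_measure_mono) auto

lemma G_0: "0 \<le> \<phi> \<Longrightarrow> \<phi> \<le> 1 \<Longrightarrow> G \<phi> 0 j = (if j \<le> 0 then 1 else 0)"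
  unfolding G_def by (simp add: binomial_pmf_0)

lemma prob_eq_on_supp:
  assumes "\<And>x. x \<in> set_pmf M \<Longrightarrow> x \<in> A \<longleftrightarrow> x \<in> B"
  shows "measure_pmf.prob M A = measure_pmf.prob M B"
proof -
  have "A \<inter> set_pmf M = B \<inter> set_pmf M" using assms by blast
  then show ?thesis by (metis measure_Int_set_pmf)
qed

lemma split_prefix:
  assumes supp: "\<And>xs. xs \<in> set_pmf \<mu> \<Longrightarrow> length xs = n" and "i < n" "length b = i"
  shows "measure_pmf.prob \<mu> {xs. take i xs = b \<and> Q xs} =
         measure_pmf.prob \<mu> {xs. take (Suc i) xs = b @ [True] \<and> Q xs} +
         measure_pmf.prob \<mu> {xs. take (Suc i) xs = b @ [False] \<and> Q xs}"
proof -
  have "measure_pmf.prob \<mu> {xs. take i xs = b \<and> Q xs} =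
        measure_pmf.prob \<mu> ({xs. take (Suc i) xs = b @ [True] \<and> Q xs} \<union> {xs. take (Suc i) xs = b @ [False] \<and> Q xs})"
  proof (rule prob_eq_on_supp)
    fix x assume "x \<in> set_pmf \<mu>"
    then have "length x = n" by (rule supp)
    then have "take (Suc i) x = take i x @ [x ! i]" using assms(2) by (simp add: take_Suc_conv_app_nth)
    then show "x \<in> {xs. take i xs = b \<and> Q xs} \<longleftrightarrow> x \<in> {xs. take (Suc i) xs = b @ [True] \<and> Q xs} \<union> {xs. take (Suc i) xs = b @ [False] \<and> Q xs}"
      by auto
  qed
  also have "\<dots> = measure_pmf.prob \<mu> {xs. take (Suc i) xs = b @ [True] \<and> Q xs} +
         measure_pmf.prob \<mu> {xs. take (Suc i) xs = b @ [False] \<and> Q xs}"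
    by (rule measure_pmf.finite_measure_Union) auto
  finally show ?thesis .
qed

lemma prefix_True_bound:
  assumes "\<mu> \<in> Bbar n \<phi>" "i < n" "length b = i"
  shows "measure_pmf.prob \<mu> {xs. take (Suc i) xs = b @ [True]} \<le> \<phi> * measure_pmf.prob \<mu> {xs. take i xs = b}"
proof -
  have supp: "\<And>xs. xs \<in> set_pmf \<mu> \<Longrightarrow> length xs = n" using assms(1) unfolding Bbar_def by auto
  have eq: "measure_pmf.prob \<mu> {xs. take (Suc i) xs = b @ [True]} = measure_pmf.prob \<mu> {xs. take i xs = b \<and> xs ! i}"
  proof (rule prob_eq_on_supp)
    fix x assume "x \<in> set_pmf \<mu>"
    then have "length x = n" by (rule supp)
    then have "take (Suc i) x = take i x @ [x ! i]" using assms(2) by (simp add: take_Suc_conv_app_nth)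
    then show "x \<in> {xs. take (Suc i) xs = b @ [True]} \<longleftrightarrow> x \<in> {xs. take i xs = b \<and> xs ! i}"
      by auto
  qed
  show ?thesis
  proof (cases "measure_pmf.prob \<mu> {xs. take i xs = b} > 0")
    case True
    then have "measure_pmf.prob \<mu> {xs. take i xs = b \<and> xs ! i} / measure_pmf.prob \<mu> {xs. take i xs = b} \<le> \<phi>"
      using assms unfolding Bbar_def by auto
    then show ?thesis using True eq by (simp add: divide_le_eq mult.commute)
  next
    case False
    then have z: "measure_pmf.prob \<mu> {xs. take i xs = b} = 0"
      using measure_nonneg[of "measure_pmf \<mu>" "{xs. take i xs = b}"] by linarith
    have "measure_pmf.prob \<mu> {xs. take i xs = b \<and> xs ! i} \<le> measure_pmf.prob \<mu> {xs. take i xs = b}"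
      by (rule measure_pmf.finite_measure_mono) auto
    then show ?thesis using z eq by (simp add: measure_nonneg order_antisym)
  qed
qed


definition cnt :: "bool list \<Rightarrow> nat" where "cnt xs = length (filter id xs)"

lemma dom_induct:
  assumes B: "\<mu> \<in> Bbar n \<phi>" and ph: "0 \<le> \<phi>" "\<phi> \<le> 1"
  shows "d \<le> n \<Longrightarrow> length b = n - d \<Longrightarrow>
    measure_pmf.prob \<mu> {xs. take (n - d) xs = b \<and> int (cnt xs) \<ge> k}
      \<le> measure_pmf.prob \<mu> {xs. take (n - d) xs = b} * G \<phi> d (k - int (cnt b))"
proof (induction d arbitrary: b k)
  case 0
  have supp: "\<And>xs. xs \<in> set_pmf \<mu> \<Longrightarrow> length xs = n" using B unfolding Bbar_def by auto
  show ?case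
  proof (cases "k - int (cnt b) \<le> 0")
    case True
    have "measure_pmf.prob \<mu> {xs. take (n - 0) xs = b \<and> int (cnt xs) \<ge> k} \<le> measure_pmf.prob \<mu> {xs. take (n - 0) xs = b}"
      by (rule measure_pmf.finite_measure_mono) auto
    then show ?thesis using True ph by (simp add: G_0)
  next
    case False
    have "set_pmf \<mu> \<inter> {xs. take (n - 0) xs = b \<and> int (cnt xs) \<ge> k} = {}"
      using supp False by auto
    then have "measure_pmf.prob \<mu> {xs. take (n - 0) xs = b \<and> int (cnt xs) \<ge> k} = 0"
      by (simp add: measure_pmf_zero_iff)
    then show ?thesis using ph False by (simp add: G_0)
  qed
next
  case (Suc d)
  have supp: "\<And>xs. xs \<in> set_pmf \<mu> \<Longrightarrow> length xs = n" using B unfolding Bbar_def by auto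
  define i where "i = n - Suc d"
  have i: "i < n" "Suc i = n - d" using Suc.prems unfolding i_def by auto
  have lb: "length b = i" using Suc.prems i_def by simp
  define pb where "pb = measure_pmf.prob \<mu> {xs. take i xs = b}"
  define pT where "pT = measure_pmf.prob \<mu> {xs. take (Suc i) xs = b @ [True]}"
  define pF where "pF = measure_pmf.prob \<mu> {xs. take (Suc i) xs = b @ [False]}"
  define a where "a = G \<phi> d (k - int (cnt b) - 1)"
  define g where "g = G \<phi> d (k - int (cnt b))"
  have IHT: "measure_pmf.prob \<mu> {xs. take (Suc i) xs = b @ [True] \<and> int (cnt xs) \<ge> k} \<le> pT * a"
    using Suc.IH[of "b @ [True]" k] Suc.prems i lb unfolding pT_def a_def by (simp add: cnt_def algebra_simps)
  have IHF: "measure_pmf.prob \<mu> {xs. take (Suc i) xs = b @ [False] \<and> int (cnt xs) \<ge> k} \<le> pF * g"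
    using Suc.IH[of "b @ [False]" k] Suc.prems i lb unfolding pF_def g_def by (simp add: cnt_def algebra_simps)
  have split1: "measure_pmf.prob \<mu> {xs. take i xs = b \<and> int (cnt xs) \<ge> k} =
      measure_pmf.prob \<mu> {xs. take (Suc i) xs = b @ [True] \<and> int (cnt xs) \<ge> k} +
      measure_pmf.prob \<mu> {xs. take (Suc i) xs = b @ [False] \<and> int (cnt xs) \<ge> k}"
    by (rule split_prefix[OF supp i(1) lb])
  have split2: "pb = pT + pF"
    using split_prefix[OF supp i(1) lb, where Q="\<lambda>_. True"] unfolding pb_def pT_def pF_def by simp
  have T: "pT \<le> \<phi> * pb" unfolding pT_def pb_def by (rule prefix_True_bound[OF B i(1) lb])
  have ag: "g \<le> a" unfolding a_def g_def by (rule G_mono) simp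
  have Gs: "G \<phi> (Suc d) (k - int (cnt b)) = \<phi> * a + (1 - \<phi>) * g"
    unfolding a_def g_def using G_Suc[OF ph] by simp
  have "measure_pmf.prob \<mu> {xs. take i xs = b \<and> int (cnt xs) \<ge> k} \<le> pT * a + pF * g"
    using split1 IHT IHF by linarith
  also have "\<dots> = pb * g + pT * (a - g)" using split2 by (simp add: algebra_simps)
  also have "\<dots> \<le> pb * g + (\<phi> * pb) * (a - g)"
    using T ag by (intro add_left_mono mult_right_mono) auto
  also have "\<dots> = pb * G \<phi> (Suc d) (k - int (cnt b))" unfolding Gs by (simp add: algebra_simps)
  finally show ?case unfolding i_def pb_def .
qed

lemma dominance:
  assumes B: "\<mu> \<in> Bbar n \<phi>" and ph: "0 \<le> \<phi>" "\<phi> \<le> 1"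
  shows "measure_pmf.prob \<mu> {xs. int (cnt xs) \<ge> k} \<le> G \<phi> n k"
  using dom_induct[OF B ph, of n "[]" k] by (simp add: cnt_def)


lemma choose_rec: "real (n choose Suc j) * real (Suc j) = real (n choose j) * real (n - j)"
proof -
  have "Suc j * (n choose Suc j) = (n - j) * (n choose j)"
    using binomial_absorption[of j n] binomial_absorb_comp[of n j] by simp
  then have "real (Suc j * (n choose Suc j)) = real ((n - j) * (n choose j))" by simp
  then show ?thesis by (simp only: of_nat_mult mult.commute)
qed

lemma mode_bound:
  assumes "K \<le> n" "1 \<le> n"
  shows "1 \<le> real (n + 1) * real (n choose K) * (real K / real n) ^ K * (1 - real K / real n) ^ (n - K)"
proof -
  define t where "t = real K / real n"
  have t01: "0 \<le> t" "t \<le> 1" using assms unfolding t_def by auto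
  define b where "b j = real (n choose j) * t ^ j * (1 - t) ^ (n - j)" for j
  have bnn: "0 \<le> b j" for j unfolding b_def using t01 by simp
  have sum1: "(\<Sum>j\<le>n. b j) = 1"
    using binomial_ring[of t "1 - t" n] unfolding b_def by simp
  have rec: "b (Suc j) * (real (Suc j) * (1 - t)) = b j * (real (n - j) * t)" if "j < n" for j
  proof -
    have e: "n - j = Suc (n - Suc j)" using that by simp
    have "b (Suc j) * (real (Suc j) * (1 - t)) = (real (n choose Suc j) * real (Suc j)) * (t ^ j * t) * ((1 - t) ^ (n - Suc j) * (1 - t))"
      unfolding b_def by (simp add: algebra_simps)
    also have "\<dots> = (real (n choose j) * real (n - j)) * (t ^ j * t) * ((1 - t) ^ (n - Suc j) * (1 - t))"
      by (simp only: choose_rec)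
    also have "\<dots> = b j * (real (n - j) * t)"
      unfolding b_def e by (simp add: algebra_simps)
    finally show ?thesis .
  qed
  have up: "b j \<le> b (Suc j)" if "j < K" for j
  proof (cases "t = 1")
    case True
    then have "K = n" using assms unfolding t_def by (simp add: divide_eq_1_iff)
    then have "b j = 0" using that True unfolding b_def by simp
    then show ?thesis using bnn by simp
  next
    case False
    then have t1: "t < 1" using t01 by simp
    have jn: "j < n" using that assms by simp
    have key: "real (Suc j) * (1 - t) \<le> real (n - j) * t"
    proof -
      have h: "real (Suc j) * real n \<le> real K * real n" using that by (intro mult_right_mono) auto
      have "real (Suc j) * (real n - real K) \<le> (real n - real j) * real K"
        using h by (simp add: algebra_simps)
      then have "real (Suc j) * real (n - K) \<le> real (n - j) * real K" using assms jn by (simp add: of_nat_diff)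
      then have "real (Suc j) * (real n - real K) / real n \<le> real (n - j) * real K / real n"
        using assms by (simp add: of_nat_diff divide_right_mono)
      then show ?thesis unfolding t_def using assms by (simp add: field_simps)
    qed
    have pos: "0 < real (Suc j) * (1 - t)" using t1 by simp
    have "b j * (real (Suc j) * (1 - t)) \<le> b j * (real (n - j) * t)"
      using key bnn by (intro mult_left_mono) auto
    also have "\<dots> = b (Suc j) * (real (Suc j) * (1 - t))" using rec[OF jn] by simp
    finally show ?thesis using pos by (rule mult_right_le_imp_le)
  qed
  have down: "b (Suc j) \<le> b j" if "K \<le> j" "j < n" for j
  proof -
    have t1: "t < 1" using that assms unfolding t_def by (simp add: divide_less_eq)
    have key: "real (n - j) * t \<le> real (Suc j) * (1 - t)"
    proof -
      have h: "real K * real n \<le> real j * real n" using that by (intro mult_right_mono) auto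
      have hK: "real K \<le> real n" using assms by simp
      have e: "(real n - real j) * real K \<le> real (Suc j) * (real n - real K) \<longleftrightarrow> real K + real K * real n \<le> real n + real j * real n"
        by (simp add: algebra_simps)
      have "(real n - real j) * real K \<le> real (Suc j) * (real n - real K)"
        unfolding e using h hK by linarith
      then have "real (n - j) * real K \<le> real (Suc j) * real (n - K)" using assms that by (simp add: of_nat_diff)
      then have "real (n - j) * real K / real n \<le> real (Suc j) * (real n - real K) / real n"
        using assms by (simp add: of_nat_diff divide_right_mono)
      then show ?thesis unfolding t_def using assms by (simp add: field_simps)
    qed
    have pos: "0 < real (Suc j) * (1 - t)" using t1 by simp
    have "b (Suc j) * (real (Suc j) * (1 - t)) = b j * (real (n - j) * t)" using rec[OF that(2)] .
    also have "\<dots> \<le> b j * (real (Suc j) * (1 - t))" using key bnn by (intro mult_left_mono) auto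
    finally show ?thesis using pos by (rule mult_right_le_imp_le)
  qed
  have le1: "b j \<le> b K" if "j \<le> K" for j
    using that
  proof (induction "K - j" arbitrary: j)
    case 0 then show ?case by simp
  next
    case (Suc m)
    then have "b (Suc j) \<le> b K" by simp
    moreover have "b j \<le> b (Suc j)" using Suc.hyps by (intro up) simp
    ultimately show ?case by simp
  qed
  have le2: "b j \<le> b K" if "K \<le> j" "j \<le> n" for j
    using that
  proof (induction j)
    case 0 then show ?case by simp
  next
    case (Suc j)
    show ?case
    proof (cases "K = Suc j")
      case True then show ?thesis by simp
    next
      case False
      then have "K \<le> j" using Suc.prems by simp
      then show ?thesis using Suc down[of j] by simp
    qed
  qed
  have "1 = (\<Sum>j\<le>n. b j)" using sum1 by simp
  also have "\<dots> \<le> (\<Sum>j\<le>n. b K)"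
    by (intro sum_mono) (metis le1 le2 atMost_iff nat_le_linear)
  also have "\<dots> = real (n + 1) * b K" by simp
  finally show ?thesis unfolding b_def t_def by (simp add: mult.assoc)
qed


lemma G_sum:
  assumes "0 < \<phi>" "\<phi> < 1"
  shows "G \<phi> n (int K) = (\<Sum>k\<in>{k. k \<le> n \<and> K \<le> k}. real (n choose k) * \<phi> ^ k * (1 - \<phi>) ^ (n - k))"
proof -
  have "G \<phi> n (int K) = measure_pmf.prob (binomial_pmf n \<phi>) ({i. int K \<le> int i} \<inter> set_pmf (binomial_pmf n \<phi>))"
    unfolding G_def by (simp only: measure_Int_set_pmf)
  also have "{i. int K \<le> int i} \<inter> set_pmf (binomial_pmf n \<phi>) = {k. k \<le> n \<and> K \<le> k}"
    using assms by auto
  also have "measure_pmf.prob (binomial_pmf n \<phi>) {k. k \<le> n \<and> K \<le> k} = sum (pmf (binomial_pmf n \<phi>)) {k. k \<le> n \<and> K \<le> k}"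
    by (rule measure_measure_pmf_finite) simp
  also have "\<dots> = (\<Sum>k\<in>{k. k \<le> n \<and> K \<le> k}. real (n choose k) * \<phi> ^ k * (1 - \<phi>) ^ (n - k))"
    using assms by (intro sum.cong) auto
  finally show ?thesis .
qed

lemma PX_G:
  assumes "1 \<le> n" "0 < \<phi>" "\<phi> < 1"
  shows "P_X n (real K / real n) \<phi> = G \<phi> n (int K)"
proof -
  have "{k. k \<le> n \<and> real k \<ge> real n * (real K / real n)} = {k. k \<le> n \<and> K \<le> k}"
    using assms by auto
  then show ?thesis unfolding P_X_def G_sum[OF assms(2,3)] by simp
qed

lemma nt_eq: "1 \<le> n \<Longrightarrow> nt n (real K / real n) = K"
  unfolding nt_def by simp

lemma chernoff:
  assumes "K \<le> n" "1 \<le> n" "0 < \<phi>" "\<phi> < 1" "\<phi> \<le> real K / real n"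
  shows "G \<phi> n (int K) \<le> (\<phi> / (real K / real n)) ^ K * ((1 - \<phi>) / (1 - real K / real n)) ^ (n - K)"
proof -
  define t where "t = real K / real n"
  define c where "c k = real (n choose k) * \<phi> ^ k * (1 - \<phi>) ^ (n - k)" for k
  define A where "A = {k. k \<le> n \<and> K \<le> k}"
  have GS: "G \<phi> n (int K) = sum c A" unfolding c_def A_def by (rule G_sum[OF assms(3,4)])
  have cnn: "0 \<le> c k" for k unfolding c_def using assms by simp
  have tpos: "0 < t" using assms unfolding t_def by linarith
  show ?thesis
  proof (cases "K = n")
    case True
    then have "A = {n}" unfolding A_def by auto
    then show ?thesis using GS True assms unfolding c_def by simp
  next
    case False
    then have Kn: "K < n" using assms by simp
    then have t1: "t < 1" unfolding t_def using assms by (simp add: divide_less_eq)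
    define r where "r = (1 - \<phi>) / (1 - t)"
    define l where "l = t * (1 - \<phi>) / (\<phi> * (1 - t))"
    have lge: "1 \<le> l" unfolding l_def using assms t1 tpos
      by (simp add: le_divide_eq algebra_simps t_def[symmetric])
    have lpos: "0 < l" using lge by simp
    have "l ^ K * sum c A = (\<Sum>k\<in>A. c k * l ^ K)" by (simp add: sum_distrib_right mult.commute)
    also have "\<dots> \<le> (\<Sum>k\<in>A. c k * l ^ k)"
      by (intro sum_mono mult_left_mono power_increasing) (auto simp: A_def lge cnn)
    also have "\<dots> \<le> (\<Sum>k\<le>n. c k * l ^ k)"
      by (intro sum_mono2) (use lpos in \<open>auto simp: A_def cnn intro!: mult_nonneg_nonneg\<close>)
    also have "\<dots> = (\<Sum>k\<le>n. real (n choose k) * (\<phi> * l) ^ k * (1 - \<phi>) ^ (n - k))"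
      unfolding c_def by (intro sum.cong) (auto simp: power_mult_distrib)
    also have "\<dots> = (\<phi> * l + (1 - \<phi>)) ^ n" by (rule binomial_ring[symmetric])
    also have "\<phi> * l + (1 - \<phi>) = r"
      unfolding l_def r_def using assms t1 by (simp add: field_simps)
    finally have "l ^ K * sum c A \<le> r ^ n" .
    then have le: "sum c A \<le> r ^ n / l ^ K" using lpos by (simp add: le_divide_eq mult.commute)
    have il: "1 / l = (\<phi> / t) / r" unfolding l_def r_def using assms t1 tpos by (simp add: field_simps)
    have rpos: "0 < r" unfolding r_def using assms t1 by simp
    have "r ^ n / l ^ K = r ^ (n - K) * r ^ K * (1 / l) ^ K"
      using assms by (simp add: power_add[symmetric] power_one_over divide_inverse power_inverse)
    also have "\<dots> = (\<phi> / t) ^ K * r ^ (n - K)"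
      unfolding il using rpos tpos by (simp add: power_divide power_mult_distrib field_simps)
    finally show ?thesis using GS le unfolding r_def t_def by simp
  qed
qed


lemma P_ge_G:
  assumes "K \<le> n" "1 \<le> n" "0 < \<phi>" "\<phi> < 1" "P \<in> {P_X, P_CH, P_PBR}"
  shows "G \<phi> n (int K) \<le> P n (real K / real n) \<phi>"
proof -
  define t where "t = real K / real n"
  have nt: "nt n t = K" unfolding t_def using assms by (simp add: nt_eq)
  have M: "1 \<le> real (n + 1) * real (n choose K) * t ^ K * (1 - t) ^ (n - K)"
    unfolding t_def by (rule mode_bound[OF assms(1,2)])
  have CH: "G \<phi> n (int K) \<le> P_CH n t \<phi>"
  proof (cases "\<phi> \<le> t")
    case True
    then show ?thesis unfolding P_CH_def nt using chernoff[OF assms(1-4)] by (simp add: t_def)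
  next
    case False
    then show ?thesis unfolding P_CH_def using G_le1 by simp
  qed
  have PBR: "G \<phi> n (int K) \<le> P_PBR n t \<phi>"
  proof (cases "\<phi> \<le> t")
    case True
    have tpos: "0 < t" using True assms by linarith
    have t1: "t \<le> 1" unfolding t_def using assms by simp
    have e1: "(\<phi> / t) ^ K * t ^ K = \<phi> ^ K" using tpos by (simp add: power_divide)
    have e2: "((1 - \<phi>) / (1 - t)) ^ (n - K) * (1 - t) ^ (n - K) = (1 - \<phi>) ^ (n - K)"
    proof (cases "t = 1")
      case True
      then have "K = n" unfolding t_def using assms by (simp add: divide_eq_1_iff)
      then show ?thesis by simp
    next
      case False
      then show ?thesis using t1 by (simp add: power_divide)
    qed
    have CHv: "P_CH n t \<phi> = (\<phi> / t) ^ K * ((1 - \<phi>) / (1 - t)) ^ (n - K)"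
      unfolding P_CH_def nt using True by simp
    have "P_PBR n t \<phi> = \<phi> ^ K * (1 - \<phi>) ^ (n - K) * real (n + 1) * real (n choose K)"
      unfolding P_PBR_def nt using True by simp
    also have "\<dots> = ((\<phi> / t) ^ K * t ^ K) * (((1 - \<phi>) / (1 - t)) ^ (n - K) * (1 - t) ^ (n - K)) * real (n + 1) * real (n choose K)"
      by (simp only: e1 e2)
    also have "\<dots> = P_CH n t \<phi> * (real (n + 1) * real (n choose K) * t ^ K * (1 - t) ^ (n - K))"
      unfolding CHv by (simp only: mult_ac)
    finally have "P_PBR n t \<phi> = P_CH n t \<phi> * (real (n + 1) * real (n choose K) * t ^ K * (1 - t) ^ (n - K))" .
    moreover have "0 \<le> P_CH n t \<phi>" using CH G_nonneg order_trans by blast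
    ultimately have "P_CH n t \<phi> \<le> P_PBR n t \<phi>" using M
      by (metis mult.right_neutral mult_left_mono)
    then show ?thesis using CH by linarith
  next
    case False
    then have "P_PBR n t \<phi> = real (n + 1) * real (n choose K) * t ^ K * (1 - t) ^ (n - K)"
      unfolding P_PBR_def nt by (simp add: algebra_simps)
    then show ?thesis using M G_le1[of \<phi> n "int K"] by linarith
  qed
  have X: "G \<phi> n (int K) \<le> P_X n t \<phi>" unfolding t_def using PX_G[OF assms(2-4)] by simp
  show ?thesis using assms(5) CH PBR X unfolding t_def by auto
qed

theorem mainTheorem14:
  fixes n :: nat and \<phi> :: real and \<mu> :: "bool list pmf"
  assumes "n \<ge> 1" and "0 < \<phi>" and "\<phi> < 1" and "\<mu> \<in> Bbar n \<phi>"
  shows "\<forall>P \<in> {P_X, P_CH, P_PBR}. \<forall>p::real. p \<ge> 0 \<longrightarrow>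
           measure_pmf.prob \<mu> {xs. P n (Theta_hat n xs) \<phi> \<le> p} \<le> p"
proof (intro ballI allI impI)
  fix P p assume P: "P \<in> {P_X, P_CH, P_PBR}" and p: "(0::real) \<le> p"
  have supp: "\<And>xs. xs \<in> set_pmf \<mu> \<Longrightarrow> length xs = n" using assms(4) unfolding Bbar_def by auto
  have PG: "G \<phi> n (int (cnt xs)) \<le> P n (Theta_hat n xs) \<phi>" if "xs \<in> set_pmf \<mu>" for xs
  proof -
    have "cnt xs \<le> n" using supp[OF that] unfolding cnt_def by (metis length_filter_le)
    then show ?thesis using P_ge_G[OF _ assms(1-3) P] unfolding Theta_hat_def cnt_def by simp
  qed
  have ex: "G \<phi> n (int (n + 1)) \<le> p"
  proof -
    have "set_pmf (binomial_pmf n \<phi>) \<inter> {i. int (n + 1) \<le> int i} = {}" using assms by auto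
    then have "G \<phi> n (int (n + 1)) = 0" unfolding G_def by (simp add: measure_pmf_zero_iff)
    then show ?thesis using p by simp
  qed
  define k0 where "k0 = (LEAST k. G \<phi> n (int k) \<le> p)"
  have k0: "G \<phi> n (int k0) \<le> p" unfolding k0_def by (rule LeastI[where P="\<lambda>k. G \<phi> n (int k) \<le> p", OF ex])
  have "measure_pmf.prob \<mu> {xs. P n (Theta_hat n xs) \<phi> \<le> p}
      = measure_pmf.prob \<mu> ({xs. P n (Theta_hat n xs) \<phi> \<le> p} \<inter> set_pmf \<mu>)"
    by (simp only: measure_Int_set_pmf)
  also have "\<dots> \<le> measure_pmf.prob \<mu> {xs. int (cnt xs) \<ge> int k0}"
  proof (rule measure_pmf.finite_measure_mono)
    show "{xs. P n (Theta_hat n xs) \<phi> \<le> p} \<inter> set_pmf \<mu> \<subseteq> {xs. int (cnt xs) \<ge> int k0}"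
    proof
      fix xs assume xs: "xs \<in> {xs. P n (Theta_hat n xs) \<phi> \<le> p} \<inter> set_pmf \<mu>"
      then have "G \<phi> n (int (cnt xs)) \<le> p" using PG by force
      then have "k0 \<le> cnt xs" unfolding k0_def by (rule Least_le)
      then show "xs \<in> {xs. int (cnt xs) \<ge> int k0}" by simp
    qed
  qed simp
  also have "\<dots> \<le> G \<phi> n (int k0)" using dominance[OF assms(4), of "int k0"] assms by simp
  finally show "measure_pmf.prob \<mu> {xs. P n (Theta_hat n xs) \<phi> \<le> p} \<le> p" using k0 by linarith
qed

end
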